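(* Let $(\Omega,\mathscr{F},\mu)$ be a complete probability space, $K\subset L^{0}(\mu)$ absolutely convex, closed in probability and bounded in probability, and $E_K=\mathrm{span}(K)$. Let $\tau$ be an equicontinuous Köthe topology on $E_K$ with the Krein-Šmulian property, induced by $F\subset E'_K$. Then for every $g\in F$ the linear map $E_K\ni f\mapsto\int_\Omega fg\,d\mu$ is $\tau$-continuous.
   Context: $L^{0}(\mu)$ carries the topology of convergence in probability. The polar of $C\subset L^{0}(\mu)$ is $C^{\circ}=\{g\in L^{0}(\mu):\sup_{f\in C}\int_\Omega|fg|\,d\mu\leq1\}$; set $E'_K=\mathrm{span}(K^{\circ})$, paired with $E_K$ via $\langle f,g\rangle=\int_\Omega fg\,d\mu$; for $F\subset E'_K$, $\sigma(E_K,F)$ is the associated weak topology on $E_K$. A set is $K$-bounded if it is contained in $\lambda K$ for some $\lambda>0$. A topology $\tau$ on $E_K$ is an equicontinuous Köthe topology if $K$ is $\tau$-compact and $\tau$ restricted to $K$-bounded sets equals $\sigma(E_K,F)$ for some $F\subset E'_K$ that is solid, separates the points of $E_K$, and contains a strictly positive element; $F$ is then said to induce $\tau$. Such $\tau$ has the Krein-Šmulian property if a convex set $C\subset E_K$ is $\tau$-closed if and only if $C\cap\lambda K$ is $\tau$-closed for each $\lambda>0$. *)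

theory Defs
  imports "HOL-Analysis.Analysis" "HOL-Probability.Probability"
begin

text \<open>Elements of L0(mu) are represented by real-valued M-measurable functions;
  almost-everywhere equality is handled explicitly where relevant.\<close>

definition conv_in_prob :: "'a measure \<Rightarrow> (nat \<Rightarrow> 'a \<Rightarrow> real) \<Rightarrow> ('a \<Rightarrow> real) \<Rightarrow> bool" where
  "conv_in_prob M fs f \<longleftrightarrow>
     (\<forall>e>0. (\<lambda>n. measure M {x \<in> space M. e < \<bar>fs n x - f x\<bar>}) \<longlonglongrightarrow> 0)"

definition closed_in_prob :: "'a measure \<Rightarrow> ('a \<Rightarrow> real) set \<Rightarrow> bool" where
  "closed_in_prob M K \<longleftrightarrow> K \<subseteq> borel_measurable M \<and>
     (\<forall>fs f. (\<forall>n. fs n \<in> K) \<longrightarrow> f \<in> borel_measurable M \<longrightarrow> conv_in_prob M fs f \<longrightarrow> f \<in> K)"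

definition bounded_in_prob :: "'a measure \<Rightarrow> ('a \<Rightarrow> real) set \<Rightarrow> bool" where
  "bounded_in_prob M K \<longleftrightarrow>
     (\<forall>e>0. \<exists>c. \<forall>f\<in>K. measure M {x \<in> space M. c < \<bar>f x\<bar>} < e)"

definition abs_convex :: "('a \<Rightarrow> real) set \<Rightarrow> bool" where
  "abs_convex K \<longleftrightarrow> (\<forall>f\<in>K. \<forall>h\<in>K. \<forall>a b::real. \<bar>a\<bar> + \<bar>b\<bar> \<le> 1 \<longrightarrow> (\<lambda>x. a * f x + b * h x) \<in> K)"

definition convex_fset :: "('a \<Rightarrow> real) set \<Rightarrow> bool" where
  "convex_fset C \<longleftrightarrow> (\<forall>f\<in>C. \<forall>h\<in>C. \<forall>t::real. 0 \<le> t \<and> t \<le> 1 \<longrightarrow> (\<lambda>x. t * f x + (1 - t) * h x) \<in> C)"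

definition lin_span :: "('a \<Rightarrow> real) set \<Rightarrow> ('a \<Rightarrow> real) set" where
  "lin_span S = {(\<lambda>x. \<Sum>i<n. c i * v i x) | (n::nat) (c::nat \<Rightarrow> real) (v::nat \<Rightarrow> 'a \<Rightarrow> real). \<forall>i<n. v i \<in> S}"

definition scaleK :: "real \<Rightarrow> ('a \<Rightarrow> real) set \<Rightarrow> ('a \<Rightarrow> real) set" where
  "scaleK c K = (\<lambda>f x. c * f x) ` K"

definition K_bounded :: "('a \<Rightarrow> real) set \<Rightarrow> ('a \<Rightarrow> real) set \<Rightarrow> bool" where
  "K_bounded K B \<longleftrightarrow> (\<exists>c>0. B \<subseteq> scaleK c K)"

definition polar :: "'a measure \<Rightarrow> ('a \<Rightarrow> real) set \<Rightarrow> ('a \<Rightarrow> real) set" where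
  "polar M C = {g \<in> borel_measurable M. \<forall>f\<in>C. (\<integral>\<^sup>+ x. ennreal \<bar>f x * g x\<bar> \<partial>M) \<le> 1}"

definition dual_K :: "'a measure \<Rightarrow> ('a \<Rightarrow> real) set \<Rightarrow> ('a \<Rightarrow> real) set" where
  "dual_K M K = lin_span (polar M K)"

definition pairing :: "'a measure \<Rightarrow> ('a \<Rightarrow> real) \<Rightarrow> ('a \<Rightarrow> real) \<Rightarrow> real" where
  "pairing M f g = (\<integral> x. f x * g x \<partial>M)"

definition weak_top :: "'a measure \<Rightarrow> ('a \<Rightarrow> real) set \<Rightarrow> ('a \<Rightarrow> real) set \<Rightarrow> ('a \<Rightarrow> real) topology" where
  "weak_top M E F = topology_generated_by
     ({E} \<union> {{f \<in> E. pairing M f g \<in> U} | g U. g \<in> F \<and> open U})"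

definition solid_in :: "'a measure \<Rightarrow> ('a \<Rightarrow> real) set \<Rightarrow> ('a \<Rightarrow> real) set \<Rightarrow> bool" where
  "solid_in M D F \<longleftrightarrow> F \<subseteq> D \<and>
     (\<forall>g\<in>F. \<forall>h\<in>D. (AE x in M. \<bar>h x\<bar> \<le> \<bar>g x\<bar>) \<longrightarrow> h \<in> F)"

definition separates_points :: "'a measure \<Rightarrow> ('a \<Rightarrow> real) set \<Rightarrow> ('a \<Rightarrow> real) set \<Rightarrow> bool" where
  "separates_points M E F \<longleftrightarrow>
     (\<forall>f\<in>E. \<forall>h\<in>E. (\<forall>g\<in>F. pairing M f g = pairing M h g) \<longrightarrow> (AE x in M. f x = h x))"

definition equicont_Koethe_top ::
  "'a measure \<Rightarrow> ('a \<Rightarrow> real) set \<Rightarrow> ('a \<Rightarrow> real) topology \<Rightarrow> ('a \<Rightarrow> real) set \<Rightarrow> bool" where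
  "equicont_Koethe_top M K \<tau> F \<longleftrightarrow>
     topspace \<tau> = lin_span K \<and>
     compactin \<tau> K \<and>
     solid_in M (dual_K M K) F \<and>
     separates_points M (lin_span K) F \<and>
     (\<exists>g\<in>F. AE x in M. 0 < g x) \<and>
     (\<forall>B. K_bounded K B \<longrightarrow> subtopology \<tau> B = subtopology (weak_top M (lin_span K) F) B)"

definition Krein_Smulian :: "('a \<Rightarrow> real) set \<Rightarrow> ('a \<Rightarrow> real) topology \<Rightarrow> bool" where
  "Krein_Smulian K \<tau> \<longleftrightarrow>
     (\<forall>C. C \<subseteq> topspace \<tau> \<longrightarrow> convex_fset C \<longrightarrow>
        (closedin \<tau> C \<longleftrightarrow> (\<forall>c>0. closedin \<tau> (C \<inter> scaleK c K))))"

end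

theory Submission
  imports Defs
begin

lemma sum_split_nat: "(\<Sum>i<n+m. F i) = (\<Sum>i<n. F i) + (\<Sum>i<m. F (i+n))" for F :: "nat \<Rightarrow> real"
  by (induction m) (auto simp: add.commute)

lemma lin_spanE:
  assumes "f \<in> lin_span S"
  obtains n :: nat and c :: "nat \<Rightarrow> real" and v :: "nat \<Rightarrow> 'a \<Rightarrow> real"
  where "f = (\<lambda>x. \<Sum>i<n. c i * v i x)" "\<forall>i<n. v i \<in> S"
  using assms unfolding lin_span_def by blast

lemma lin_spanI:
  fixes n :: nat and c :: "nat \<Rightarrow> real" and v :: "nat \<Rightarrow> 'a \<Rightarrow> real"
  assumes "f = (\<lambda>x. \<Sum>i<n. c i * v i x)" "\<forall>i<n. v i \<in> S"
  shows "f \<in> lin_span S"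
  using assms unfolding lin_span_def by blast

lemma lin_span_comb:
  assumes "f \<in> lin_span S" "h \<in> lin_span S"
  shows "(\<lambda>x. a * f x + b * h x) \<in> lin_span S"
proof -
  obtain n :: nat and c :: "nat \<Rightarrow> real" and v where f: "f = (\<lambda>x. \<Sum>i<n. c i * v i x)" and v: "\<forall>i<n. v i \<in> S"
    using assms(1) by (rule lin_spanE) blast
  obtain m :: nat and d :: "nat \<Rightarrow> real" and w where h: "h = (\<lambda>x. \<Sum>i<m. d i * w i x)" and w: "\<forall>i<m. w i \<in> S"
    using assms(2) by (rule lin_spanE) blast
  define c' where "c' (i::nat) = (if i < n then a * c i else b * d (i - n))" for i
  define v' where "v' (i::nat) = (if i < n then v i else w (i - n))" for i
  have "(\<lambda>x. a * f x + b * h x) = (\<lambda>x. \<Sum>i<n+m. c' i * v' i x)"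
  proof
    fix x
    have "(\<Sum>i<n+m. c' i * v' i x) = (\<Sum>i<n. c' i * v' i x) + (\<Sum>i<m. c' (i+n) * v' (i+n) x)"
      by (rule sum_split_nat)
    also have "(\<Sum>i<n. c' i * v' i x) = a * f x"
      by (simp add: f c'_def v'_def sum_distrib_left mult.assoc)
    also have "(\<Sum>i<m. c' (i+n) * v' (i+n) x) = b * h x"
      by (simp add: h c'_def v'_def sum_distrib_left mult.assoc)
    finally show "a * f x + b * h x = (\<Sum>i<n+m. c' i * v' i x)" by simp
  qed
  moreover have "\<forall>i<n+m. v' i \<in> S" using v w by (auto simp: v'_def)
  ultimately show ?thesis by (intro lin_spanI) auto
qed

lemma lin_span_scale:
  assumes "f \<in> S" shows "(\<lambda>x. c * f x) \<in> lin_span S"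
proof -
  have "(\<lambda>x. c * f x) = (\<lambda>x. \<Sum>i<Suc 0. (\<lambda>_. c) i * (\<lambda>_. f) i x)" by simp
  then show ?thesis using assms by (intro lin_spanI[where n="Suc 0" and c="\<lambda>_. c" and v="\<lambda>_. f"]) auto
qed

lemma lin_span_integrable_left:
  assumes "\<And>v. v \<in> S \<Longrightarrow> integrable M (\<lambda>x. v x * g x)" "f \<in> lin_span S"
  shows "integrable M (\<lambda>x. f x * g x)"
proof -
  obtain n :: nat and c :: "nat \<Rightarrow> real" and v where f: "f = (\<lambda>x. \<Sum>i<n. c i * v i x)" and v: "\<forall>i<n. v i \<in> S"
    using assms(2) by (rule lin_spanE) blast
  have "(\<lambda>x. f x * g x) = (\<lambda>x. \<Sum>i<n. c i * (v i x * g x))"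
    by (simp add: f sum_distrib_right mult.assoc)
  moreover have "integrable M (\<lambda>x. \<Sum>i<n. c i * (v i x * g x))"
    using v assms(1) by (auto intro!: integrable_sum)
  ultimately show ?thesis by simp
qed

lemma lin_span_integrable_right:
  assumes "\<And>v. v \<in> S \<Longrightarrow> integrable M (\<lambda>x. f x * v x)" "g \<in> lin_span S"
  shows "integrable M (\<lambda>x. f x * g x)"
proof -
  obtain n :: nat and c :: "nat \<Rightarrow> real" and v where g: "g = (\<lambda>x. \<Sum>i<n. c i * v i x)" and v: "\<forall>i<n. v i \<in> S"
    using assms(2) by (rule lin_spanE) blast
  have "(\<lambda>x. f x * g x) = (\<lambda>x. \<Sum>i<n. c i * (f x * v i x))"
    by (simp add: g sum_distrib_left mult.assoc mult.left_commute)
  moreover have "integrable M (\<lambda>x. \<Sum>i<n. c i * (f x * v i x))"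
    using v assms(1) by (auto intro!: integrable_sum)
  ultimately show ?thesis by simp
qed

lemma polar_integrable:
  assumes "w \<in> borel_measurable M" "w \<in> K" "v \<in> polar M K"
  shows "integrable M (\<lambda>x. w x * v x)"
proof (rule integrableI_bounded)
  have "v \<in> borel_measurable M" using assms(3) polar_def by auto
  then show "(\<lambda>x. w x * v x) \<in> borel_measurable M" using assms(1) by measurable
  have "(\<integral>\<^sup>+ x. ennreal (norm (w x * v x)) \<partial>M) \<le> 1"
    using assms(2,3) unfolding polar_def by auto
  then show "(\<integral>\<^sup>+ x. ennreal (norm (w x * v x)) \<partial>M) < \<infinity>"
    by (simp add: le_less_trans)
qed

theorem lemma5p1:
  fixes M :: "'a measure" and K F :: "('a \<Rightarrow> real) set" and \<tau> :: "('a \<Rightarrow> real) topology"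
    and g :: "'a \<Rightarrow> real"
  assumes "prob_space M" and "complete_measure M"
    and "K \<subseteq> borel_measurable M"
    and "abs_convex K" and "closed_in_prob M K" and "bounded_in_prob M K"
    and "equicont_Koethe_top M K \<tau> F"
    and "Krein_Smulian K \<tau>"
    and "g \<in> F"
  shows "continuous_map \<tau> euclideanreal (\<lambda>f. pairing M f g)"
proof -
  define E where "E = lin_span K"
  define \<phi> where "\<phi> = (\<lambda>f. pairing M f g)"
  have top: "topspace \<tau> = E" using assms(7) unfolding equicont_Koethe_top_def E_def by blast
  have gd: "g \<in> dual_K M K" using assms(7,9) unfolding equicont_Koethe_top_def solid_in_def by blast
  have sub: "subtopology \<tau> B = subtopology (weak_top M E F) B" if "K_bounded K B" for B
    using assms(7) that unfolding equicont_Koethe_top_def E_def by blast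
  have KS: "closedin \<tau> C \<longleftrightarrow> (\<forall>c>0. closedin \<tau> (C \<inter> scaleK c K))"
    if "C \<subseteq> E" "convex_fset C" for C
    using assms(8) that top unfolding Krein_Smulian_def by blast
  have int: "integrable M (\<lambda>x. f x * g x)" if "f \<in> E" for f
  proof -
    have "integrable M (\<lambda>x. w x * g x)" if "w \<in> K" for w
    proof (rule lin_span_integrable_right[where S="polar M K"])
      show "g \<in> lin_span (polar M K)" using gd unfolding dual_K_def .
      fix v assume "v \<in> polar M K"
      then show "integrable M (\<lambda>x. w x * v x)"
        using that assms(3) polar_integrable by blast
    qed
    then show ?thesis using that unfolding E_def by (rule lin_span_integrable_left)
  qed
  have lin: "\<phi> (\<lambda>x. a * f x + b * h x) = a * \<phi> f + b * \<phi> h" if "f \<in> E" "h \<in> E" for a b f h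
  proof -
    have "(\<lambda>x. (a * f x + b * h x) * g x) = (\<lambda>x. a * (f x * g x) + b * (h x * g x))"
      by (simp add: algebra_simps)
    then show ?thesis
      using int[OF that(1)] int[OF that(2)] unfolding \<phi>_def pairing_def
      by simp
  qed
  have scE: "scaleK c K \<subseteq> E" for c
    unfolding scaleK_def E_def using lin_span_scale by blast
  have Eclosed: "closedin \<tau> E" using top by (metis closedin_topspace)
  have Econv: "convex_fset E"
    unfolding convex_fset_def E_def using lin_span_comb by blast
  have scclosed: "closedin \<tau> (scaleK c K)" if "c > 0" for c
    using KS[OF order_refl Econv] Eclosed that scE by (metis inf.absorb_iff2)
  have wtop: "topspace (weak_top M E F) = E"
    unfolding weak_top_def by auto
  have closedS: "closedin \<tau> {f \<in> E. \<phi> f \<in> S}" if "closed S" "convex S" for S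
  proof -
    have weakcl: "closedin (weak_top M E F) {f \<in> E. \<phi> f \<in> S}"
    proof -
      have "openin (weak_top M E F) {f \<in> E. pairing M f g \<in> - S}"
        unfolding weak_top_def
      proof (rule topology_generated_by_Basis)
        have "open (- S)" using that(1) by (simp add: open_Compl)
        then show "{f \<in> E. pairing M f g \<in> - S} \<in> {E} \<union> {{f \<in> E. pairing M f g' \<in> U} |g' U. g' \<in> F \<and> open U}"
          using assms(9) by blast
      qed
      moreover have "E - {f \<in> E. \<phi> f \<in> S} = {f \<in> E. pairing M f g \<in> - S}"
        unfolding \<phi>_def by auto
      ultimately show ?thesis unfolding closedin_def wtop by auto
    qed
    have conv: "convex_fset {f \<in> E. \<phi> f \<in> S}"
      unfolding convex_fset_def
    proof (intro ballI allI impI)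
      fix f h and t :: real assume f: "f \<in> {f \<in> E. \<phi> f \<in> S}" and h: "h \<in> {f \<in> E. \<phi> f \<in> S}"
        and t: "0 \<le> t \<and> t \<le> 1"
      have "(\<lambda>x. t * f x + (1 - t) * h x) \<in> E"
        using f h unfolding E_def using lin_span_comb by blast
      moreover have "\<phi> (\<lambda>x. t * f x + (1 - t) * h x) \<in> S"
        using lin[of f h t "1 - t"] f h t that(2) unfolding convex_def by auto
      ultimately show "(\<lambda>x. t * f x + (1 - t) * h x) \<in> {f \<in> E. \<phi> f \<in> S}" by blast
    qed
    show ?thesis
    proof (subst KS[OF _ conv], blast, intro allI impI)
      fix c :: real assume c: "c > 0"
      have kb: "K_bounded K (scaleK c K)" unfolding K_bounded_def using c by blast
      have "closedin (subtopology (weak_top M E F) (scaleK c K)) ({f \<in> E. \<phi> f \<in> S} \<inter> scaleK c K)"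
        using weakcl by (auto simp: closedin_subtopology)
      then have "closedin (subtopology \<tau> (scaleK c K)) ({f \<in> E. \<phi> f \<in> S} \<inter> scaleK c K)"
        using sub[OF kb] by simp
      then show "closedin \<tau> ({f \<in> E. \<phi> f \<in> S} \<inter> scaleK c K)"
        using closedin_trans_full scclosed[OF c] by blast
    qed
  qed
  show ?thesis
    unfolding continuous_map_upper_lower_semicontinuous_le top
  proof (intro allI conjI)
    fix a :: real
    show "closedin \<tau> {x \<in> E. a \<le> pairing M x g}"
      using closedS[of "{a..}"] unfolding \<phi>_def by (simp add: convex_real_interval)
    show "closedin \<tau> {x \<in> E. pairing M x g \<le> a}"
      using closedS[of "{..a}"] unfolding \<phi>_def by (simp add: convex_real_interval)
  qed
qed

end
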